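(* Let $G$ be any graph in the class $\mathcal{G}$ (defined in the context), and suppose $L(T_G^0)=L(T_G^1)=k+1$ for a positive integer $k$. Then for each vertex $V$ of $G$, the binary string $\phi_G(V)$ has length $2^{k+1-L(V)}$. In particular, $\phi_G(V_G^r)$ has length $2^k$.
   Context: $\mathcal{G}$ is the set of all finite graphs $G$ such that: (a) $G$ is directed and acyclic; (b) $G$ has a unique nonterminal vertex $V_G^r$ (the root) such that every other vertex is reachable from $V_G^r$ by a directed path; (c) $G$ has exactly two terminal vertices (vertices with no outgoing edges), denoted $T_G^0$ and $T_G^1$; (d) from each nonterminal vertex emanate exactly two edges, one labelled $0$ and one labelled $1$, terminating at different vertices; (e) each vertex $V$ carries a positive integer level $L(V)$ with $L(V_G^r)=1$, $L(T_G^0)=L(T_G^1)$, and levels strictly increasing along every directed path (not necessarily consecutively). For a binary string $y$ and positive integer $j$, $y^j$ denotes the concatenation of $j$ copies of $y$; juxtaposition denotes concatenation. The map $\phi_G$ from the vertex set of $G$ to the set of nonempty finite binary strings is defined by $\phi_G(T_G^0)=0$, $\phi_G(T_G^1)=1$, and for a nonterminal vertex $V$ whose $0$-edge leads to $V_0$ and whose $1$-edge leads to $V_1$, $\phi_G(V)=\phi_G(V_0)^{(2^{L(V_0)-L(V)-1})}\phi_G(V_1)^{(2^{L(V_1)-L(V)-1})}$. *)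

theory Defs
  imports Main
begin

text \<open>A graph in the class G is encoded by: a finite vertex set V, root r, terminal
vertices t0 and t1, successor functions e0 and e1 (the targets of the 0-edge and the
1-edge of a nonterminal vertex; their values at terminals are irrelevant), and a
level function L.\<close>

definition edges :: "'v set \<Rightarrow> 'v \<Rightarrow> 'v \<Rightarrow> ('v \<Rightarrow> 'v) \<Rightarrow> ('v \<Rightarrow> 'v) \<Rightarrow> ('v \<times> 'v) set" where
  "edges V t0 t1 e0 e1 = {(v, e0 v) | v. v \<in> V - {t0, t1}} \<union> {(v, e1 v) | v. v \<in> V - {t0, t1}}"

definition in_class_G ::
  "'v set \<Rightarrow> 'v \<Rightarrow> 'v \<Rightarrow> 'v \<Rightarrow> ('v \<Rightarrow> 'v) \<Rightarrow> ('v \<Rightarrow> 'v) \<Rightarrow> ('v \<Rightarrow> nat) \<Rightarrow> bool" where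
  "in_class_G V r t0 t1 e0 e1 L \<longleftrightarrow>
     finite V \<and> r \<in> V \<and> t0 \<in> V \<and> t1 \<in> V \<and> t0 \<noteq> t1 \<and> r \<noteq> t0 \<and> r \<noteq> t1 \<and>
     (\<forall>v \<in> V - {t0, t1}. e0 v \<in> V \<and> e1 v \<in> V \<and> e0 v \<noteq> e1 v) \<and>
     acyclic (edges V t0 t1 e0 e1) \<and>
     (\<forall>v \<in> V. (r, v) \<in> (edges V t0 t1 e0 e1)\<^sup>*) \<and>
     (\<forall>w \<in> V - {t0, t1}. (\<forall>v \<in> V. (w, v) \<in> (edges V t0 t1 e0 e1)\<^sup>*) \<longrightarrow> w = r) \<and>
     (\<forall>v \<in> V. 0 < L v) \<and> L r = 1 \<and> L t0 = L t1 \<and>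
     (\<forall>(u, w) \<in> edges V t0 t1 e0 e1. L u < L w)"

text \<open>phi with explicit recursion fuel; binary strings are bool lists (False = 0, True = 1).\<close>
fun phi_fuel :: "nat \<Rightarrow> 'v \<Rightarrow> 'v \<Rightarrow> ('v \<Rightarrow> 'v) \<Rightarrow> ('v \<Rightarrow> 'v) \<Rightarrow> ('v \<Rightarrow> nat) \<Rightarrow> 'v \<Rightarrow> bool list" where
  "phi_fuel 0 t0 t1 e0 e1 L v = []"
| "phi_fuel (Suc n) t0 t1 e0 e1 L v =
     (if v = t0 then [False] else if v = t1 then [True] else
        concat (replicate (2 ^ (L (e0 v) - L v - 1)) (phi_fuel n t0 t1 e0 e1 L (e0 v))) @
        concat (replicate (2 ^ (L (e1 v) - L v - 1)) (phi_fuel n t0 t1 e0 e1 L (e1 v))))"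

text \<open>Since the graph is acyclic, every directed path has fewer than card V edges,
so card V units of fuel suffice for the recursion to reach the terminals.\<close>
definition phi :: "'v set \<Rightarrow> 'v \<Rightarrow> 'v \<Rightarrow> ('v \<Rightarrow> 'v) \<Rightarrow> ('v \<Rightarrow> 'v) \<Rightarrow> ('v \<Rightarrow> nat) \<Rightarrow> 'v \<Rightarrow> bool list" where
  "phi V t0 t1 e0 e1 L v = phi_fuel (card V) t0 t1 e0 e1 L v"

end

theory Submission
  imports Defs
begin

lemma main_aux:
  assumes G: "in_class_G V r t0 t1 e0 e1 L"
    and "L t0 = k + 1" and "L t1 = k + 1"
  shows "v \<in> V \<Longrightarrow> L v \<le> k + 1 \<and> (v \<notin> {t0,t1} \<longrightarrow> L v \<le> k) \<and>
     (\<forall>n \<ge> card {w. (v, w) \<in> (edges V t0 t1 e0 e1)\<^sup>*}.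
        length (phi_fuel n t0 t1 e0 e1 L v) = 2 ^ (k + 1 - L v))"
proof (induction "card {w. (v, w) \<in> (edges V t0 t1 e0 e1)\<^sup>*}" arbitrary: v rule: less_induct)
  case (less v)
  define E where "E = edges V t0 t1 e0 e1"
  have fin: "finite V" using G by (simp add: in_class_G_def)
  have EV: "E \<subseteq> V \<times> V" using G unfolding E_def edges_def in_class_G_def by auto
  have ac: "acyclic E" using G unfolding E_def in_class_G_def by auto
  have Lmono: "\<And>u w. (u,w) \<in> E \<Longrightarrow> L u < L w" using G unfolding E_def in_class_G_def by auto
  have RV: "\<And>x. x \<in> V \<Longrightarrow> {w. (x, w) \<in> E\<^sup>*} \<subseteq> V"
  proof
    fix x w assume "x \<in> V" "w \<in> {w. (x, w) \<in> E\<^sup>*}"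
    then have "(x,w) \<in> E\<^sup>*" by simp
    then show "w \<in> V" using \<open>x \<in> V\<close> by (induction rule: rtrancl_induct) (use EV in auto)
  qed
  have finR: "\<And>x. x \<in> V \<Longrightarrow> finite {w. (x, w) \<in> E\<^sup>*}" using RV fin finite_subset by blast
  have cardpos: "card {w. (v, w) \<in> E\<^sup>*} \<ge> 1"
    using finR[OF less.prems] by (metis (no_types, lifting) One_nat_def Suc_leI card_gt_0_iff empty_iff mem_Collect_eq rtrancl.rtrancl_refl)
  show ?case
  proof (cases "v \<in> {t0,t1}")
    case True
    have "L v = k+1" using True assms by auto
    moreover have "length (phi_fuel n t0 t1 e0 e1 L v) = 1" if "n \<ge> 1" for n
      using that True by (cases n) auto
    ultimately show ?thesis using cardpos E_def True by auto
  next
    case False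
    have vn: "v \<in> V - {t0,t1}" using False less.prems by auto
    have succ: "e0 v \<in> V" "e1 v \<in> V" using G vn unfolding in_class_G_def by auto
    have ed: "(v, e0 v) \<in> E" "(v, e1 v) \<in> E" using vn unfolding E_def edges_def by auto
    have strict: "card {w. (x, w) \<in> E\<^sup>*} < card {w. (v, w) \<in> E\<^sup>*}" if x: "(v,x) \<in> E" for x
    proof -
      have xV: "x \<in> V" using x EV by auto
      have sub: "{w. (x, w) \<in> E\<^sup>*} \<subseteq> {w. (v, w) \<in> E\<^sup>*}" using x by (auto intro: converse_rtrancl_into_rtrancl)
      have "v \<notin> {w. (x, w) \<in> E\<^sup>*}"
      proof
        assume "v \<in> {w. (x, w) \<in> E\<^sup>*}"
        then have "(v,v) \<in> E\<^sup>+" using x by (simp add: rtrancl_into_trancl2)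
        then show False using ac unfolding acyclic_def by blast
      qed
      then have "{w. (x, w) \<in> E\<^sup>*} \<subset> {w. (v, w) \<in> E\<^sup>*}" using sub by auto
      then show ?thesis using finR[OF less.prems] psubset_card_mono by blast
    qed
    note IH0 = less.hyps[OF strict[OF ed(1), unfolded E_def] succ(1)]
    note IH1 = less.hyps[OF strict[OF ed(2), unfolded E_def] succ(2)]
    have l0: "L v < L (e0 v)" "L v < L (e1 v)" using Lmono ed by auto
    have lk: "L v \<le> k" using l0 IH0 by auto
    have pw: "2 ^ (a - b - 1) * 2 ^ (k + 1 - a) = (2::nat) ^ (k - b)" if "b < a" "a \<le> k+1" for a b
    proof -
      have "a - b - 1 + (k + 1 - a) = k - b" using that by arith
      then show ?thesis by (metis power_add)
    qed
    have len: "length (phi_fuel n t0 t1 e0 e1 L v) = 2 ^ (k + 1 - L v)"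
      if n: "n \<ge> card {w. (v, w) \<in> E\<^sup>*}" for n
    proof -
      obtain m where m: "n = Suc m" using n cardpos by (cases n) auto
      have m0: "m \<ge> card {w. (e0 v, w) \<in> E\<^sup>*}" and m1: "m \<ge> card {w. (e1 v, w) \<in> E\<^sup>*}"
        using strict[OF ed(1)] strict[OF ed(2)] n m by auto
      have a0: "length (phi_fuel m t0 t1 e0 e1 L (e0 v)) = 2 ^ (k + 1 - L (e0 v))"
        using IH0 m0 E_def by auto
      have a1: "length (phi_fuel m t0 t1 e0 e1 L (e1 v)) = 2 ^ (k + 1 - L (e1 v))"
        using IH1 m1 E_def by auto
      have "length (phi_fuel n t0 t1 e0 e1 L v) =
        2 ^ (L (e0 v) - L v - 1) * 2 ^ (k + 1 - L (e0 v)) + 2 ^ (L (e1 v) - L v - 1) * 2 ^ (k + 1 - L (e1 v))"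
        using m False a0 a1 by (simp add: length_concat sum_list_replicate)
      also have "\<dots> = 2 ^ (k - L v) + 2 ^ (k - L v)"
        using pw l0 IH0 IH1 by auto
      also have "\<dots> = 2 ^ (k + 1 - L v)" using lk
        by (metis Suc_diff_le Suc_eq_plus1 mult_2 power_Suc)
      finally show ?thesis .
    qed
    show ?thesis using lk len E_def by auto
  qed
qed

theorem lemma1:
  fixes V :: "'v set" and r t0 t1 :: 'v and e0 e1 :: "'v \<Rightarrow> 'v" and L :: "'v \<Rightarrow> nat" and k :: nat
  assumes "in_class_G V r t0 t1 e0 e1 L"
    and "0 < k"
    and "L t0 = k + 1" and "L t1 = k + 1"
  shows "(\<forall>v \<in> V. length (phi V t0 t1 e0 e1 L v) = 2 ^ (k + 1 - L v))
         \<and> length (phi V t0 t1 e0 e1 L r) = 2 ^ k"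
proof -
  define E where "E = edges V t0 t1 e0 e1"
  have fin: "finite V" using assms(1) by (simp add: in_class_G_def)
  have EV: "E \<subseteq> V \<times> V" using assms(1) unfolding E_def edges_def in_class_G_def by auto
  have RV: "\<And>x. x \<in> V \<Longrightarrow> {w. (x, w) \<in> E\<^sup>*} \<subseteq> V"
  proof
    fix x w assume "x \<in> V" "w \<in> {w. (x, w) \<in> E\<^sup>*}"
    then have "(x,w) \<in> E\<^sup>*" by simp
    then show "w \<in> V" using \<open>x \<in> V\<close> by (induction rule: rtrancl_induct) (use EV in auto)
  qed
  have A: "\<forall>v \<in> V. length (phi V t0 t1 e0 e1 L v) = 2 ^ (k + 1 - L v)"
  proof
    fix v assume v: "v \<in> V"
    have "card {w. (v, w) \<in> E\<^sup>*} \<le> card V" using RV[OF v] fin card_mono by blast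
    then show "length (phi V t0 t1 e0 e1 L v) = 2 ^ (k + 1 - L v)"
      using main_aux[OF assms(1) assms(3,4) v] unfolding phi_def E_def by auto
  qed
  have "r \<in> V" "L r = 1" using assms(1) by (auto simp: in_class_G_def)
  then show ?thesis using A by auto
qed

end
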